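(* Let $k,n\in\mathbb N^+$ and $\mathbf C=(c_0,\dots,c_k)\in\{0,1\}^{k+1}$. For every integer $m$ with $1\le m\le n$, $$O_{\mathbf C}(n,m+c_k-1)=(n-1)!^k\sum_{\substack{J\subseteq\{2,\dots,n\}\\ |J|=m-1}}\ \prod_{j\in J}F_j(\mathbf C)\prod_{j\in\{2,\dots,n\}\setminus J}F_j(\mathbf C'),$$ and for every integer $m\ge 0$ with $m=0$ or $m>n$, $O_{\mathbf C}(n,m+c_k-1)=0$.
   Context: Fix integers $k\ge 1$, $n\ge 1$ and a vector $\mathbf C=(c_0,c_1,\dots,c_k)\in\{0,1\}^{k+1}$; put $\mathbf C'=(1,\dots,1)-\mathbf C=(c'_0,\dots,c'_k)$. Consider $k$-tuples $(\pi_1,\dots,\pi_k)$ of permutations of $\{1,\dots,n\}$ (there are $n!^k$ of them). A position $\alpha\in\{1,\dots,n\}$ is a record of a permutation $\pi$ if $\pi(\alpha)<\pi(\alpha')$ for every $\alpha'<\alpha$ (so position $1$ is always a record); equivalently, the records index the unique minimum-cardinality subset of the points $\{(\alpha,\pi(\alpha))\}$ such that every point either lies in it or is strictly dominated in both coordinates by one of its points (the "optimization set" for the relation $(<,<)$). For a tuple, let $l_\alpha$ be the number of $\beta\in\{1,\dots,k\}$ for which $\alpha$ is a record of $\pi_\beta$ (so $l_1=k$). The $\mathbf C$ sequential optimization set of the tuple is $S=\{\alpha: c_{l_\alpha}=1\}$, and its weight is $|S|$. For an integer $m$, the $\mathbf C$ sequential optimization number $O_{\mathbf C}(n,m)$ is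 the number of $k$-tuples whose weight equals $m$ (so $O_{\mathbf C}(n,m)=0$ if $m<0$ or $m>n$). For $j\ge 2$ and $X=(x_0,\dots,x_k)\in\mathbb R^{k+1}$ set $F_j(X)=\sum_{\beta=0}^k\binom{k}{\beta}\frac{x_\beta}{(j-1)^\beta}$. Empty products equal $1$. *)

theory Defs
  imports Main "HOL-Library.FuncSet" "HOL-Combinatorics.Permutations" Complex_Main
begin

definition perm_tuples :: "nat \<Rightarrow> nat \<Rightarrow> (nat \<Rightarrow> nat \<Rightarrow> nat) set" where
  "perm_tuples k n = Pi\<^sub>E {1..k} (\<lambda>_. {p. p permutes {1..n}})"

definition is_record :: "nat \<Rightarrow> (nat \<Rightarrow> nat) \<Rightarrow> nat \<Rightarrow> bool" where
  "is_record n p a \<longleftrightarrow> a \<in> {1..n} \<and> (\<forall>a'. 1 \<le> a' \<and> a' < a \<longrightarrow> p a < p a')"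

definition rec_count :: "nat \<Rightarrow> nat \<Rightarrow> (nat \<Rightarrow> nat \<Rightarrow> nat) \<Rightarrow> nat \<Rightarrow> nat" where
  "rec_count k n t a = card {b \<in> {1..k}. is_record n (t b) a}"

definition seq_opt_set :: "(nat \<Rightarrow> int) \<Rightarrow> nat \<Rightarrow> nat \<Rightarrow> (nat \<Rightarrow> nat \<Rightarrow> nat) \<Rightarrow> nat set" where
  "seq_opt_set c k n t = {a \<in> {1..n}. c (rec_count k n t a) = 1}"

definition seq_opt_num :: "(nat \<Rightarrow> int) \<Rightarrow> nat \<Rightarrow> nat \<Rightarrow> int \<Rightarrow> nat" where
  "seq_opt_num c k n m = card {t \<in> perm_tuples k n. int (card (seq_opt_set c k n t)) = m}"

definition F :: "nat \<Rightarrow> nat \<Rightarrow> (nat \<Rightarrow> real) \<Rightarrow> real" where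
  "F k j X = (\<Sum>b = 0..k. real (k choose b) * X b / (real j - 1) ^ b)"

end

theory Submission
  imports Defs
begin

definition ext :: "nat \<Rightarrow> nat \<Rightarrow> (nat \<Rightarrow> nat) \<Rightarrow> nat \<Rightarrow> nat" where
  "ext n v q i = (if i = Suc n then v else if i \<in> {1..n} then (if q i < v then q i else Suc (q i)) else i)"

lemma ext_in:
  assumes q: "q permutes {1..n}" and v: "v \<in> {1..Suc n}" and i: "i \<in> {1..n}"
  shows "ext n v q i \<in> {1..Suc n} - {v}"
proof -
  have "q i \<in> {1..n}" using permutes_in_image[OF q, of i] i by blast
  then show ?thesis using i v by (auto simp: ext_def)
qed

lemma ext_mono:
  assumes q: "q permutes {1..n}" and i: "i \<in> {1..n}" and j: "j \<in> {1..n}"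
  shows "ext n v q i < ext n v q j \<longleftrightarrow> q i < q j"
  using i j by (auto simp: ext_def)

lemma ext_permutes:
  assumes q: "q permutes {1..n}" and v: "v \<in> {1..Suc n}"
  shows "ext n v q permutes {1..Suc n}"
proof (rule bij_imp_permutes)
  have inj: "inj_on (ext n v q) {1..Suc n}"
  proof (rule inj_onI)
    fix x y assume x: "x \<in> {1..Suc n}" and y: "y \<in> {1..Suc n}" and e: "ext n v q x = ext n v q y"
    show "x = y"
    proof (cases "x = Suc n")
      case True
      then show ?thesis using e ext_in[OF q v, of y] y by (cases "y = Suc n") (auto simp: ext_def)
    next
      case False
      note xf = False
      show ?thesis
      proof (cases "y = Suc n")
        case True then show ?thesis using e ext_in[OF q v, of x] x xf by (auto simp: ext_def)
      next
        case False
        have xi: "x \<in> {1..n}" "y \<in> {1..n}" using x y xf False by auto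
        have "\<not> q x < q y" "\<not> q y < q x" using ext_mono[OF q xi(1) xi(2), of v] ext_mono[OF q xi(2) xi(1), of v] e by auto
        then have "q x = q y" by simp
        then show ?thesis using permutes_inj[OF q] by (simp add: inj_eq)
      qed
    qed
  qed
  have sub: "ext n v q ` {1..Suc n} \<subseteq> {1..Suc n}"
  proof
    fix y assume "y \<in> ext n v q ` {1..Suc n}"
    then obtain x where x: "x \<in> {1..Suc n}" "y = ext n v q x" by auto
    show "y \<in> {1..Suc n}"
    proof (cases "x = Suc n")
      case True then show ?thesis using x v by (simp add: ext_def)
    next
      case False then show ?thesis using x ext_in[OF q v, of x] by auto
    qed
  qed
  have "ext n v q ` {1..Suc n} = {1..Suc n}" by (rule endo_inj_surj[OF _ sub inj]) simp
  then show "bij_betw (ext n v q) {1..Suc n} {1..Suc n}" using inj by (simp add: bij_betw_def)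
next
  fix x assume "x \<notin> {1..Suc n}" then show "ext n v q x = x" by (auto simp: ext_def)
qed

lemma ext_inj:
  "inj_on (\<lambda>(v, q). ext n v q) ({1..Suc n} \<times> {q. q permutes {1..n}})"
proof (rule inj_onI, clarify)
  fix v q v' q'
  assume v: "v \<in> {1..Suc n}" and q: "q permutes {1..n}" and v': "v' \<in> {1..Suc n}" and q': "q' permutes {1..n}"
    and e: "ext n v q = ext n v' q'"
  have vv: "v = v'" using fun_cong[OF e, of "Suc n"] by (simp add: ext_def)
  have "q i = q' i" for i
  proof (cases "i \<in> {1..n}")
    case True
    have "ext n v q i = ext n v q' i" using e vv by simp
    then show ?thesis using True by (auto simp: ext_def split: if_splits)
  next
    case False then show ?thesis using q q' by (simp add: permutes_not_in)
  qed
  then show "v = v' \<and> q = q'" using vv by auto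
qed

lemma ext_image:
  "(\<lambda>(v, q). ext n v q) ` ({1..Suc n} \<times> {q. q permutes {1..n}}) = {p. p permutes {1..Suc n}}"
proof (rule card_subset_eq)
  show "finite {p. p permutes {1..Suc n}}" by (simp add: finite_permutations)
  show "(\<lambda>(v, q). ext n v q) ` ({1..Suc n} \<times> {q. q permutes {1..n}}) \<subseteq> {p. p permutes {1..Suc n}}"
    using ext_permutes by auto
  have "card ((\<lambda>(v, q). ext n v q) ` ({1..Suc n} \<times> {q. q permutes {1..n}})) = Suc n * fact n"
  proof -
    have "card {q. q permutes {1..n}} = fact n" by (rule card_permutations) auto
    then show ?thesis by (subst card_image[OF ext_inj]) (simp add: card_cartesian_product)
  qed
  also have "\<dots> = card {p. p permutes {1..Suc n}}" by (simp add: card_permutations)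
  finally show "card ((\<lambda>(v, q). ext n v q) ` ({1..Suc n} \<times> {q. q permutes {1..n}})) = card {p. p permutes {1..Suc n}}" .
qed

lemma ext_record_old:
  assumes q: "q permutes {1..n}" and a: "a \<in> {1..n}"
  shows "is_record (Suc n) (ext n v q) a \<longleftrightarrow> is_record n q a"
proof -
  have "(\<forall>a'. 1 \<le> a' \<and> a' < a \<longrightarrow> ext n v q a < ext n v q a') \<longleftrightarrow> (\<forall>a'. 1 \<le> a' \<and> a' < a \<longrightarrow> q a < q a')"
    using ext_mono[OF q a] a by auto
  then show ?thesis using a by (simp add: is_record_def)
qed

lemma ext_record_new:
  assumes q: "q permutes {1..n}" and v: "v \<in> {1..Suc n}" and n: "n \<ge> 1"
  shows "is_record (Suc n) (ext n v q) (Suc n) \<longleftrightarrow> v = 1"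
proof
  assume r: "is_record (Suc n) (ext n v q) (Suc n)"
  show "v = 1"
  proof (rule ccontr)
    assume "v \<noteq> 1"
    obtain a where a: "q a = 1" using permutes_surj[OF q] by (metis surjD)
    have "a \<in> {1..n}" using a n q by (metis atLeastAtMost_iff le_refl permutes_in_image)
    then have "ext n v q a = 1" using a v \<open>v \<noteq> 1\<close> by (auto simp: ext_def)
    then show False using r \<open>a \<in> {1..n}\<close> v by (auto simp: is_record_def ext_def)
  qed
next
  assume v1: "v = 1"
  have "ext n v q a' > 1" if "a' \<in> {1..n}" for a'
  proof -
    have "q a' \<in> {1..n}" using permutes_in_image[OF q, of a'] that by blast
    then show ?thesis using that v1 by (auto simp: ext_def)
  qed
  then show "is_record (Suc n) (ext n v q) (Suc n)"
    using v1 by (auto simp: is_record_def ext_def)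
qed

lemma sum_v:
  fixes x y :: real
  shows "(\<Sum>v\<in>{1..Suc n}. if v = 1 then x else y) = x + real n * y"
proof -
  have "{1..Suc n} = insert 1 {2..Suc n}" by auto
  then have "(\<Sum>v\<in>{1..Suc n}. if v = 1 then x else y) = x + (\<Sum>v\<in>{2..Suc n}. if v = 1 then x else y)"
    by simp
  also have "(\<Sum>v\<in>{2..Suc n}. if v = 1 then x else y) = (\<Sum>v\<in>{2..Suc n}. y)"
    by (rule sum.cong) auto
  finally show ?thesis by simp
qed

lemma perm_sum:
  fixes h :: "nat \<Rightarrow> nat \<Rightarrow> real"
  assumes "n \<ge> 1"
  shows "(\<Sum>p\<in>{p. p permutes {1..n}}. \<Prod>a\<in>{2..n}. h a (if is_record n p a then 1 else 0))
        = (\<Prod>a\<in>{2..n}. real (a - 1) * h a 0 + h a 1)"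
  using assms
proof (induction n rule: nat_induct_at_least)
  case base
  have "card {p. p permutes {1..1::nat}} = fact 1" by (rule card_permutations) auto
  then show ?case by simp
next
  case (Suc n)
  let ?f = "\<lambda>p. \<Prod>a\<in>{2..Suc n}. h a (if is_record (Suc n) p a then 1 else 0)"
  let ?R = "\<Prod>a\<in>{2..n}. real (a - 1) * h a 0 + h a 1"
  have ins: "{2..Suc n} = insert (Suc n) {2..n}" using Suc.hyps by auto
  have fe: "?f (ext n v q) = (if v = 1 then h (Suc n) 1 else h (Suc n) 0) *
      (\<Prod>a\<in>{2..n}. h a (if is_record n q a then 1 else 0))"
    if v: "v \<in> {1..Suc n}" and q: "q permutes {1..n}" for v q
  proof -
    have "?f (ext n v q) = h (Suc n) (if is_record (Suc n) (ext n v q) (Suc n) then 1 else 0) *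
       (\<Prod>a\<in>{2..n}. h a (if is_record (Suc n) (ext n v q) a then 1 else 0))"
      unfolding ins by simp
    also have "(\<Prod>a\<in>{2..n}. h a (if is_record (Suc n) (ext n v q) a then 1 else 0)) =
        (\<Prod>a\<in>{2..n}. h a (if is_record n q a then 1 else 0))"
      by (rule prod.cong) (auto simp: ext_record_old[OF q])
    finally show ?thesis using ext_record_new[OF q v Suc.hyps] by simp
  qed
  have "(\<Sum>p\<in>{p. p permutes {1..Suc n}}. ?f p) = sum (?f \<circ> (\<lambda>(v, q). ext n v q)) ({1..Suc n} \<times> {q. q permutes {1..n}})"
    unfolding ext_image[symmetric] by (rule sum.reindex[OF ext_inj])
  also have "\<dots> = (\<Sum>(v, q)\<in>{1..Suc n} \<times> {q. q permutes {1..n}}. ?f (ext n v q))"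
    by (rule sum.cong) auto
  also have "\<dots> = (\<Sum>v\<in>{1..Suc n}. \<Sum>q\<in>{q. q permutes {1..n}}. ?f (ext n v q))"
    by (rule sum.cartesian_product[symmetric])
  also have "\<dots> = (\<Sum>v\<in>{1..Suc n}. (if v = 1 then h (Suc n) 1 else h (Suc n) 0) *
      (\<Sum>q\<in>{q. q permutes {1..n}}. \<Prod>a\<in>{2..n}. h a (if is_record n q a then 1 else 0)))"
  proof (rule sum.cong[OF refl])
    fix v assume v: "v \<in> {1..Suc n}"
    show "(\<Sum>q\<in>{q. q permutes {1..n}}. ?f (ext n v q)) = (if v = 1 then h (Suc n) 1 else h (Suc n) 0) *
      (\<Sum>q\<in>{q. q permutes {1..n}}. \<Prod>a\<in>{2..n}. h a (if is_record n q a then 1 else 0))"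
      unfolding sum_distrib_left by (rule sum.cong[OF refl], rule fe[OF v], simp)
  qed
  also have "\<dots> = (\<Sum>v\<in>{1..Suc n}. (if v = 1 then h (Suc n) 1 else h (Suc n) 0)) * ?R"
    by (simp only: Suc.IH sum_distrib_right)
  also have "\<dots> = (h (Suc n) 1 + real n * h (Suc n) 0) * ?R"
    using sum_v[of "h (Suc n) 1" "h (Suc n) 0" n] by (simp only:)
  also have "\<dots> = (\<Prod>a\<in>{2..Suc n}. real (a - 1) * h a 0 + h a 1)"
    unfolding ins by simp
  finally show ?case .
qed

lemma pascal_sum:
  fixes x :: real and g :: "nat \<Rightarrow> real"
  shows "x * (\<Sum>b\<le>k. real (k choose b) * x ^ (k - b) * g b) + (\<Sum>b\<le>k. real (k choose b) * x ^ (k - b) * g (Suc b))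
       = (\<Sum>b\<le>Suc k. real (Suc k choose b) * x ^ (Suc k - b) * g b)"
proof -
  have A: "(\<Sum>b\<le>Suc k. real (k choose b) * x ^ (Suc k - b) * g b) = x * (\<Sum>b\<le>k. real (k choose b) * x ^ (k - b) * g b)"
    by (simp add: sum_distrib_left Suc_diff_le mult_ac)
  have B: "(\<Sum>b\<le>Suc k. real (k choose b) * x ^ (Suc k - b) * g b) = x ^ Suc k * g 0 + (\<Sum>b\<le>k. real (k choose Suc b) * x ^ (k - b) * g (Suc b))"
    by (subst sum.atMost_Suc_shift) simp
  have "(\<Sum>b\<le>Suc k. real (Suc k choose b) * x ^ (Suc k - b) * g b) = x ^ Suc k * g 0 + (\<Sum>b\<le>k. real (Suc k choose Suc b) * x ^ (k - b) * g (Suc b))"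
    by (subst sum.atMost_Suc_shift) simp
  also have "\<dots> = x ^ Suc k * g 0 + (\<Sum>b\<le>k. real (k choose Suc b) * x ^ (k - b) * g (Suc b)) + (\<Sum>b\<le>k. real (k choose b) * x ^ (k - b) * g (Suc b))"
    by (simp add: sum.distrib algebra_simps)
  finally show ?thesis using A B by simp
qed

lemma rc_upd:
  "rec_count (Suc k) n (t(Suc k := p)) a = rec_count k n t a + (if is_record n p a then 1 else 0)"
proof -
  have "{b \<in> {1..Suc k}. is_record n ((t(Suc k := p)) b) a} = {b \<in> {1..k}. is_record n (t b) a} \<union> (if is_record n p a then {Suc k} else {})"
    by auto
  then show ?thesis unfolding rec_count_def by (simp add: card_insert_if)
qed

lemma tuple_sum:
  fixes g :: "nat \<Rightarrow> nat \<Rightarrow> real"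
  assumes n: "n \<ge> 1"
  shows "(\<Sum>t\<in>perm_tuples k n. \<Prod>a\<in>{2..n}. g a (rec_count k n t a))
       = (\<Prod>a\<in>{2..n}. \<Sum>b\<le>k. real (k choose b) * real (a - 1) ^ (k - b) * g a b)"
proof (induction k arbitrary: g)
  case 0
  have "perm_tuples 0 n = {\<lambda>_. undefined}" by (simp add: perm_tuples_def)
  moreover have "rec_count 0 n t a = 0" for t a by (simp add: rec_count_def)
  ultimately show ?case by simp
next
  case (Suc k)
  let ?P = "{p. p permutes {1..n}}"
  let ?T = "perm_tuples k n"
  let ?r = "\<lambda>p a. if is_record n p a then 1 else (0::nat)"
  have PT: "perm_tuples (Suc k) n = (\<lambda>(y, g). g(Suc k := y)) ` (?P \<times> ?T)"
  proof -
    have "{1..Suc k} = insert (Suc k) {1..k}" by auto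
    then show ?thesis unfolding perm_tuples_def by (simp add: PiE_insert_eq)
  qed
  have inj: "inj_on (\<lambda>(y, g). g(Suc k := y)) (?P \<times> ?T)"
    unfolding perm_tuples_def by (rule inj_combinator) simp
  let ?F = "\<lambda>t. \<Prod>a\<in>{2..n}. g a (rec_count (Suc k) n t a)"
  let ?h = "\<lambda>a r. \<Sum>b\<le>k. real (k choose b) * real (a - 1) ^ (k - b) * g a (b + r)"
  have "(\<Sum>t\<in>perm_tuples (Suc k) n. ?F t) = sum (?F \<circ> (\<lambda>(y, g). g(Suc k := y))) (?P \<times> ?T)"
    unfolding PT by (rule sum.reindex[OF inj])
  also have "\<dots> = (\<Sum>(p, t)\<in>?P \<times> ?T. ?F (t(Suc k := p)))"
    by (rule sum.cong) auto
  also have "\<dots> = (\<Sum>p\<in>?P. \<Sum>t\<in>?T. ?F (t(Suc k := p)))"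
    by (rule sum.cartesian_product[symmetric])
  also have "\<dots> = (\<Sum>p\<in>?P. \<Sum>t\<in>?T. \<Prod>a\<in>{2..n}. g a (rec_count k n t a + ?r p a))"
    by (simp only: rc_upd)
  also have "\<dots> = (\<Sum>p\<in>?P. \<Prod>a\<in>{2..n}. ?h a (?r p a))"
    by (rule sum.cong[OF refl], rule Suc.IH)
  also have "\<dots> = (\<Prod>a\<in>{2..n}. real (a - 1) * ?h a 0 + ?h a 1)"
    by (rule perm_sum[OF n])
  also have "\<dots> = (\<Prod>a\<in>{2..n}. \<Sum>b\<le>Suc k. real (Suc k choose b) * real (a - 1) ^ (Suc k - b) * g a b)"
  proof (rule prod.cong[OF refl])
    fix a
    show "real (a - 1) * ?h a 0 + ?h a 1 = (\<Sum>b\<le>Suc k. real (Suc k choose b) * real (a - 1) ^ (Suc k - b) * g a b)"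
      using pascal_sum[of "real (a - 1)" k "g a"] by simp
  qed
  finally show ?case .
qed

lemma finite_T: "finite (perm_tuples k n)"
  unfolding perm_tuples_def by (rule finite_PiE) (auto simp: finite_permutations)

lemma rc_le: "rec_count k n t a \<le> k"
proof -
  have "card {b \<in> {1..k}. is_record n (t b) a} \<le> card {1..k}" by (rule card_mono) auto
  then show ?thesis by (simp add: rec_count_def)
qed

lemma rc1: assumes "n \<ge> 1" shows "rec_count k n t 1 = k"
proof -
  have "{b \<in> {1..k}. is_record n (t b) 1} = {1..k}" using assms by (auto simp: is_record_def)
  then show ?thesis by (simp add: rec_count_def)
qed

definition Sp :: "(nat \<Rightarrow> int) \<Rightarrow> nat \<Rightarrow> nat \<Rightarrow> (nat \<Rightarrow> nat \<Rightarrow> nat) \<Rightarrow> nat set" where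
  "Sp c k n t = {a \<in> {2..n}. c (rec_count k n t a) = 1}"

lemma card_S:
  assumes n: "n \<ge> 1" and c: "c k \<in> {0, 1}"
  shows "int (card (seq_opt_set c k n t)) = c k + int (card (Sp c k n t))"
proof -
  have "seq_opt_set c k n t = (if c k = 1 then {1} else {}) \<union> Sp c k n t"
  proof -
    have "{1..n} = insert 1 {2..n}" using n by auto
    then show ?thesis using rc1[OF n, of k t] by (auto simp: seq_opt_set_def Sp_def)
  qed
  moreover have "1 \<notin> Sp c k n t" by (simp add: Sp_def)
  moreover have "finite (Sp c k n t)" by (simp add: Sp_def)
  ultimately show ?thesis using c by auto
qed

lemma card_Sp: "card (Sp c k n t) \<le> n - 1"
proof -
  have "card (Sp c k n t) \<le> card {2..n}" by (rule card_mono) (auto simp: Sp_def)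
  then show ?thesis by simp
qed

lemma indicator_prod:
  assumes c: "\<forall>i \<le> k. c i \<in> {0, 1}" and J: "J \<subseteq> {2..n}"
  shows "(if Sp c k n t = J then 1 else (0::real)) =
     (\<Prod>a\<in>{2..n}. (\<lambda>a b. if a \<in> J then real_of_int (c b) else 1 - real_of_int (c b)) a (rec_count k n t a))"
proof -
  let ?g = "\<lambda>a b. if a \<in> J then real_of_int (c b) else 1 - real_of_int (c b)"
  have cv: "c (rec_count k n t a) \<in> {0, 1}" for a using c rc_le by blast
  have gv: "?g a (rec_count k n t a) = (if (a \<in> J \<longleftrightarrow> c (rec_count k n t a) = 1) then 1 else 0)" for a
    using cv[of a] by auto
  have eq: "Sp c k n t = J \<longleftrightarrow> (\<forall>a\<in>{2..n}. (a \<in> J \<longleftrightarrow> c (rec_count k n t a) = 1))"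
    using J by (auto simp: Sp_def)
  show ?thesis
  proof (cases "Sp c k n t = J")
    case True
    then have "\<forall>a\<in>{2..n}. ?g a (rec_count k n t a) = 1" using eq gv cv by fastforce
    then show ?thesis using True by simp
  next
    case False
    then obtain a where a: "a \<in> {2..n}" "\<not> (a \<in> J \<longleftrightarrow> c (rec_count k n t a) = 1)" using eq by blast
    then have "?g a (rec_count k n t a) = 0" using cv[of a] by auto
    then have "(\<Prod>a\<in>{2..n}. ?g a (rec_count k n t a)) = 0" using a(1) by (intro prod_zero) (auto intro!: bexI[of _ a])
    then show ?thesis using False by simp
  qed
qed

lemma F_eq:
  assumes a: "a \<ge> 2"
  shows "(\<Sum>b\<le>k. real (k choose b) * real (a - 1) ^ (k - b) * X b) = real (a - 1) ^ k * F k a X"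
proof -
  have pos: "real a - 1 > 0" using a by simp
  have "real (a - 1) ^ (k - b) = real (a - 1) ^ k / (real a - 1) ^ b" if "b \<le> k" for b
    using that pos a by (simp add: power_diff of_nat_diff)
  then have "(\<Sum>b\<le>k. real (k choose b) * real (a - 1) ^ (k - b) * X b) =
     (\<Sum>b\<le>k. real (a - 1) ^ k * (real (k choose b) * X b / (real a - 1) ^ b))"
    by (intro sum.cong) auto
  also have "\<dots> = real (a - 1) ^ k * F k a X"
    by (simp add: F_def sum_distrib_left atLeast0AtMost)
  finally show ?thesis .
qed

lemma fact_prod_shift: assumes "n \<ge> 1" shows "(\<Prod>a\<in>{2..n}. real (a - 1)) = fact (n - 1)"
proof -
  obtain n' where n': "n = Suc n'" using assms by (cases n) auto
  have e: "{2..n} = {Suc 1..Suc n'}" using n' by simp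
  have "(\<Prod>a\<in>{2..n}. real (a - 1)) = (\<Prod>a\<in>{Suc 1..Suc n'}. real (a - 1))" unfolding e ..
  also have "\<dots> = (\<Prod>i\<in>{1..n'}. real (Suc i - 1))" by (rule prod.shift_bounds_cl_Suc_ivl)
  also have "\<dots> = (\<Prod>i\<in>{1..n'}. real i)" by simp
  also have "\<dots> = fact n'" by (simp add: fact_prod)
  finally show ?thesis using n' by simp
qed

theorem theorem2p1:
  fixes k n :: nat and c :: "nat \<Rightarrow> int"
  assumes "k \<ge> 1" and "n \<ge> 1"
    and "\<forall>i \<le> k. c i \<in> {0, 1}"
  shows "(\<forall>m::int. 1 \<le> m \<and> m \<le> int n \<longrightarrow>
            real (seq_opt_num c k n (m + c k - 1)) =
            (fact (n - 1)) ^ k *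
            (\<Sum>J \<in> {J. J \<subseteq> {2..n} \<and> int (card J) = m - 1}.
               (\<Prod>j \<in> J. F k j (\<lambda>i. real_of_int (c i))) *
               (\<Prod>j \<in> {2..n} - J. F k j (\<lambda>i. 1 - real_of_int (c i)))))
       \<and> (\<forall>m::int. m \<ge> 0 \<and> (m = 0 \<or> m > int n) \<longrightarrow>
            seq_opt_num c k n (m + c k - 1) = 0)"
proof
  note n = assms(2) and c = assms(3)
  have ck: "c k \<in> {0, 1}" using c by auto
  let ?T = "perm_tuples k n"
  have cs: "int (card (seq_opt_set c k n t)) = c k + int (card (Sp c k n t))" for t
    by (rule card_S[where c=c and k=k, OF n ck])
  have cb: "int (card (Sp c k n t)) \<le> int n - 1" for t
    using card_Sp[of c k n t] n by linarith
  show "\<forall>m::int. m \<ge> 0 \<and> (m = 0 \<or> m > int n) \<longrightarrow> seq_opt_num c k n (m + c k - 1) = 0"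
  proof (intro allI impI)
    fix m :: int assume m: "m \<ge> 0 \<and> (m = 0 \<or> m > int n)"
    have "{t \<in> ?T. int (card (seq_opt_set c k n t)) = m + c k - 1} = {}"
    proof -
      have "int (card (seq_opt_set c k n t)) \<noteq> m + c k - 1" for t
        using cs[of t] cb[of t] m by auto
      then show ?thesis by auto
    qed
    then show "seq_opt_num c k n (m + c k - 1) = 0" unfolding seq_opt_num_def by (metis card.empty)
  qed
  show "\<forall>m::int. 1 \<le> m \<and> m \<le> int n \<longrightarrow>
            real (seq_opt_num c k n (m + c k - 1)) =
            (fact (n - 1)) ^ k *
            (\<Sum>J \<in> {J. J \<subseteq> {2..n} \<and> int (card J) = m - 1}.
               (\<Prod>j \<in> J. F k j (\<lambda>i. real_of_int (c i))) *
               (\<Prod>j \<in> {2..n} - J. F k j (\<lambda>i. 1 - real_of_int (c i))))"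
  proof (intro allI impI)
    fix m :: int assume m: "1 \<le> m \<and> m \<le> int n"
    define JJ where "JJ = {J. J \<subseteq> {2..n} \<and> int (card J) = m - 1}"
    define G where "G J a b = (if a \<in> J then real_of_int (c b) else 1 - real_of_int (c b))" for J :: "nat set" and a b
    let ?C = "\<lambda>i. real_of_int (c i)" and ?C' = "\<lambda>i. 1 - real_of_int (c i)"
    have finJJ: "finite JJ"
      by (rule finite_subset[of _ "Pow {2..n}"]) (auto simp: JJ_def)
    have spsub: "Sp c k n t \<subseteq> {2..n}" for t by (auto simp: Sp_def)
    have setEq: "{t \<in> ?T. int (card (seq_opt_set c k n t)) = m + c k - 1} = {t \<in> ?T. Sp c k n t \<in> JJ}"
      using cs spsub by (auto simp: JJ_def)
    have "real (seq_opt_num c k n (m + c k - 1)) = real (card {t \<in> ?T. Sp c k n t \<in> JJ})"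
      by (simp add: seq_opt_num_def setEq)
    also have "\<dots> = (\<Sum>t\<in>?T. if Sp c k n t \<in> JJ then 1 else 0)"
      using finite_T[of k n] by (simp add: sum.If_cases Int_def conj_commute)
    also have "\<dots> = (\<Sum>t\<in>?T. \<Sum>J\<in>JJ. if Sp c k n t = J then 1 else 0)"
      by (rule sum.cong[OF refl]) (simp add: sum.delta'[OF finJJ])
    also have "\<dots> = (\<Sum>J\<in>JJ. \<Sum>t\<in>?T. if Sp c k n t = J then 1 else 0)"
      by (rule sum.swap)
    also have "\<dots> = (\<Sum>J\<in>JJ. \<Sum>t\<in>?T. \<Prod>a\<in>{2..n}. G J a (rec_count k n t a))"
    proof (rule sum.cong[OF refl], rule sum.cong[OF refl])
      fix J t assume "J \<in> JJ"
      then have "J \<subseteq> {2..n}" by (simp add: JJ_def)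
      from indicator_prod[OF c this, of t] show "(if Sp c k n t = J then 1 else 0) = (\<Prod>a\<in>{2..n}. G J a (rec_count k n t a))"
        by (simp add: G_def)
    qed
    also have "\<dots> = (\<Sum>J\<in>JJ. \<Prod>a\<in>{2..n}. \<Sum>b\<le>k. real (k choose b) * real (a - 1) ^ (k - b) * G J a b)"
      by (rule sum.cong[OF refl], rule tuple_sum[OF n])
    also have "\<dots> = (\<Sum>J\<in>JJ. \<Prod>a\<in>{2..n}. real (a - 1) ^ k * (if a \<in> J then F k a ?C else F k a ?C'))"
    proof (rule sum.cong[OF refl], rule prod.cong[OF refl])
      fix J a assume a: "a \<in> {2..n}"
      have "(\<Sum>b\<le>k. real (k choose b) * real (a - 1) ^ (k - b) * G J a b) = real (a - 1) ^ k * F k a (G J a)"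
        using a by (intro F_eq) simp
      moreover have "F k a (G J a) = (if a \<in> J then F k a ?C else F k a ?C')"
      proof -
        have "G J a = (if a \<in> J then ?C else ?C')" by (rule HOL.ext) (simp add: G_def)
        then show ?thesis by simp
      qed
      ultimately show "(\<Sum>b\<le>k. real (k choose b) * real (a - 1) ^ (k - b) * G J a b) = real (a - 1) ^ k * (if a \<in> J then F k a ?C else F k a ?C')"
        by simp
    qed
    also have "\<dots> = (\<Sum>J\<in>JJ. fact (n - 1) ^ k * ((\<Prod>j\<in>J. F k j ?C) * (\<Prod>j\<in>{2..n} - J. F k j ?C')))"
    proof (rule sum.cong[OF refl])
      fix J assume "J \<in> JJ"
      then have J: "J \<subseteq> {2..n}" by (simp add: JJ_def)
      have "(\<Prod>a\<in>{2..n}. real (a - 1) ^ k * (if a \<in> J then F k a ?C else F k a ?C')) =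
          (\<Prod>a\<in>{2..n}. real (a - 1)) ^ k * (\<Prod>a\<in>{2..n}. (if a \<in> J then F k a ?C else F k a ?C'))"
        by (simp add: prod.distrib prod_power_distrib)
      also have "(\<Prod>a\<in>{2..n}. (if a \<in> J then F k a ?C else F k a ?C')) = (\<Prod>j\<in>J. F k j ?C) * (\<Prod>j\<in>{2..n} - J. F k j ?C')"
      proof -
        have e1: "{2..n} \<inter> J = J" using J by auto
        have e2: "{2..n} \<inter> - J = {2..n} - J" by auto
        show ?thesis by (simp add: prod.If_cases e1 e2)
      qed
      finally show "(\<Prod>a\<in>{2..n}. real (a - 1) ^ k * (if a \<in> J then F k a ?C else F k a ?C')) =
          fact (n - 1) ^ k * ((\<Prod>j\<in>J. F k j ?C) * (\<Prod>j\<in>{2..n} - J. F k j ?C'))"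
        by (simp only: fact_prod_shift[OF n])
    qed
    also have "\<dots> = fact (n - 1) ^ k * (\<Sum>J\<in>JJ. (\<Prod>j\<in>J. F k j ?C) * (\<Prod>j\<in>{2..n} - J. F k j ?C'))"
      by (simp add: sum_distrib_left)
    finally show "real (seq_opt_num c k n (m + c k - 1)) =
            (fact (n - 1)) ^ k *
            (\<Sum>J \<in> {J. J \<subseteq> {2..n} \<and> int (card J) = m - 1}.
               (\<Prod>j \<in> J. F k j ?C) * (\<Prod>j \<in> {2..n} - J. F k j ?C'))"
      by (simp only: JJ_def)
  qed
qed

end
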